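(* Assume $T_B\colon\mathcal D(T_B)\to Y_B$ is bijective, and let $P_n\colon X\to X(n)$ be the projection associated to the decomposition $X=X(n)\oplus Z(n)$ (so $\ker P_n=Z(n)$). Then for each $n\in\mathbb Z$ the operator $A_n|_{\ker P_n}\colon\ker P_n\to\ker P_{n+1}$ is invertible (bijective).
   Context: $B$ is an admissible Banach sequence space: a complete normed space $B$ of real sequences $(s_n)_{n\in\mathbb Z}$ such that $\mathbf{s}'\in B$, $|s_n|\le|s'_n|$ for all $n$ imply $\mathbf{s}\in B$, $\|\mathbf{s}\|_B\le\|\mathbf{s}'\|_B$; $\chi_{\{n\}}\in B$ with $\|\chi_{\{n\}}\|_B>0$ for all $n$; and shifts $(s_{n+m})_n$ of elements of $B$ are in $B$ with norm at most $N\|\mathbf{s}\|_B$ for a fixed $N>0$. $X$ is a Banach space with norms $\|\cdot\|_n$ ($n\in\mathbb Z$) each equivalent to its norm; $(A_m)_{m\in\mathbb Z}$ are bounded linear operators on $X$. $Y_B$ is the Banach space of sequences $\mathbf{x}=(x_n)_{n\in\mathbb Z}$ in $X$ with $(\|x_n\|_n)_n\in B$, normed by $\|(\|x_n\|_n)_n\|_B$; $(T_B\mathbf{x})_n=x_n-A_{n-1}x_{n-1}$ on $\mathcal D(T_B)=\{\mathbf{x}\in Y_B:T_B\mathbf{x}\in Y_B\}$. For $n\in\mathbb Z$, $X(n)$ is the set of $x\in X$ for which there is $\mathbf{x}=(x_m)_m\in Y_B$ with $x_n=x$ and $x_m=A_{m-1}x_{m-1}$ for all $m>n$; $Z(n)$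 is the set of $x\in X$ for which there is $\mathbf{z}=(z_m)_m\in Y_B$ with $z_n=x$ and $z_m=A_{m-1}z_{m-1}$ for all $m\le n$. When $T_B$ is bijective, $X=X(n)\oplus Z(n)$ for every $n$. *)

theory Defs
  imports "HOL-Analysis.Analysis"
begin

definition seq_normed_space :: "(int \<Rightarrow> real) set \<Rightarrow> ((int \<Rightarrow> real) \<Rightarrow> real) \<Rightarrow> bool" where
  "seq_normed_space B nB \<longleftrightarrow>
     (\<lambda>n. 0) \<in> B \<and>
     (\<forall>s\<in>B. \<forall>t\<in>B. (\<lambda>n. s n + t n) \<in> B) \<and>
     (\<forall>s\<in>B. \<forall>c::real. (\<lambda>n. c * s n) \<in> B) \<and>
     (\<forall>s\<in>B. nB s \<ge> 0) \<and>
     (\<forall>s\<in>B. nB s = 0 \<longleftrightarrow> s = (\<lambda>n. 0)) \<and>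
     (\<forall>s\<in>B. \<forall>c::real. nB (\<lambda>n. c * s n) = \<bar>c\<bar> * nB s) \<and>
     (\<forall>s\<in>B. \<forall>t\<in>B. nB (\<lambda>n. s n + t n) \<le> nB s + nB t)"

definition seq_space_complete :: "(int \<Rightarrow> real) set \<Rightarrow> ((int \<Rightarrow> real) \<Rightarrow> real) \<Rightarrow> bool" where
  "seq_space_complete B nB \<longleftrightarrow>
     (\<forall>f :: nat \<Rightarrow> int \<Rightarrow> real. (\<forall>k. f k \<in> B) \<longrightarrow>
        (\<forall>e>0. \<exists>M. \<forall>k\<ge>M. \<forall>l\<ge>M. nB (\<lambda>n. f k n - f l n) < e) \<longrightarrow>
        (\<exists>s\<in>B. (\<lambda>k. nB (\<lambda>n. f k n - s n)) \<longlonglongrightarrow> 0))"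

definition admissible :: "(int \<Rightarrow> real) set \<Rightarrow> ((int \<Rightarrow> real) \<Rightarrow> real) \<Rightarrow> real \<Rightarrow> bool" where
  "admissible B nB N \<longleftrightarrow>
     seq_normed_space B nB \<and> seq_space_complete B nB \<and>
     (\<forall>s s'. s' \<in> B \<longrightarrow> (\<forall>n. \<bar>s n\<bar> \<le> \<bar>s' n\<bar>) \<longrightarrow> s \<in> B \<and> nB s \<le> nB s') \<and>
     (\<forall>n. (\<lambda>k. if k = n then 1 else 0) \<in> B \<and> nB (\<lambda>k. if k = n then 1 else 0) > 0) \<and>
     N > 0 \<and>
     (\<forall>s\<in>B. \<forall>m. (\<lambda>n. s (n + m)) \<in> B \<and> nB (\<lambda>n. s (n + m)) \<le> N * nB s)"

definition equiv_norm :: "('a::real_normed_vector \<Rightarrow> real) \<Rightarrow> bool" where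
  "equiv_norm p \<longleftrightarrow>
     (\<forall>x. p x \<ge> 0) \<and> (\<forall>x. p x = 0 \<longleftrightarrow> x = 0) \<and>
     (\<forall>c x. p (scaleR c x) = \<bar>c\<bar> * p x) \<and>
     (\<forall>x y. p (x + y) \<le> p x + p y) \<and>
     (\<exists>c C. c > 0 \<and> C > 0 \<and> (\<forall>x. c * norm x \<le> p x \<and> p x \<le> C * norm x))"

definition YB :: "(int \<Rightarrow> real) set \<Rightarrow> (int \<Rightarrow> 'a \<Rightarrow> real) \<Rightarrow> (int \<Rightarrow> 'a) set" where
  "YB B nrm = {x. (\<lambda>n. nrm n (x n)) \<in> B}"

definition TB :: "(int \<Rightarrow> 'a \<Rightarrow> 'a::real_vector) \<Rightarrow> (int \<Rightarrow> 'a) \<Rightarrow> (int \<Rightarrow> 'a)" where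
  "TB A x = (\<lambda>n. x n - A (n - 1) (x (n - 1)))"

definition dom_TB :: "(int \<Rightarrow> real) set \<Rightarrow> (int \<Rightarrow> 'a \<Rightarrow> real) \<Rightarrow> (int \<Rightarrow> 'a \<Rightarrow> 'a::real_vector) \<Rightarrow> (int \<Rightarrow> 'a) set" where
  "dom_TB B nrm A = {x \<in> YB B nrm. TB A x \<in> YB B nrm}"

definition Xsp :: "(int \<Rightarrow> real) set \<Rightarrow> (int \<Rightarrow> 'a \<Rightarrow> real) \<Rightarrow> (int \<Rightarrow> 'a \<Rightarrow> 'a) \<Rightarrow> int \<Rightarrow> 'a set" where
  "Xsp B nrm A n = {v. \<exists>x \<in> YB B nrm. x n = v \<and> (\<forall>m>n. x m = A (m - 1) (x (m - 1)))}"

definition Zsp :: "(int \<Rightarrow> real) set \<Rightarrow> (int \<Rightarrow> 'a \<Rightarrow> real) \<Rightarrow> (int \<Rightarrow> 'a \<Rightarrow> 'a) \<Rightarrow> int \<Rightarrow> 'a set" where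
  "Zsp B nrm A n = {v. \<exists>z \<in> YB B nrm. z n = v \<and> (\<forall>m\<le>n. z m = A (m - 1) (z (m - 1)))}"

end

theory Submission
  imports Defs
begin

theorem lemma3p7:
  fixes B :: "(int \<Rightarrow> real) set" and nB :: "(int \<Rightarrow> real) \<Rightarrow> real" and N :: real
    and nrm :: "int \<Rightarrow> 'a::banach \<Rightarrow> real"
    and A :: "int \<Rightarrow> 'a \<Rightarrow> 'a"
    and P :: "int \<Rightarrow> 'a \<Rightarrow> 'a"
  assumes adm: "admissible B nB N"
    and norms: "\<And>n. equiv_norm (nrm n)"
    and bl: "\<And>m. bounded_linear (A m)"
    and bij: "bij_betw (TB A) (dom_TB B nrm A) (YB B nrm)"
    and P_lin: "\<And>n. linear (P n)"
    and P_idem: "\<And>n x. P n (P n x) = P n x"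
    and P_range: "\<And>n. range (P n) = Xsp B nrm A n"
    and P_ker: "\<And>n. {x. P n x = 0} = Zsp B nrm A n"
  shows "\<forall>n. bij_betw (A n) {x. P n x = 0} {x. P (n + 1) x = 0}"
proof
  fix n
  have sns: "seq_normed_space B nB" using adm unfolding admissible_def by blast
  have mono: "\<And>s s'. s' \<in> B \<Longrightarrow> (\<forall>n. \<bar>s n\<bar> \<le> \<bar>s' n\<bar>) \<Longrightarrow> s \<in> B"
    using adm unfolding admissible_def by blast
  have chi: "\<And>k. (\<lambda>j. if j = k then 1 else 0) \<in> B"
    using adm unfolding admissible_def by blast
  have add: "\<And>s t. s \<in> B \<Longrightarrow> t \<in> B \<Longrightarrow> (\<lambda>n. s n + t n) \<in> B"
    and smul: "\<And>s c. s \<in> B \<Longrightarrow> (\<lambda>n. c * s n) \<in> B"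
    and zB: "(\<lambda>n. 0) \<in> B"
    using sns unfolding seq_normed_space_def by blast+
  have nrm0: "\<And>m. nrm m 0 = 0" and nrmnn: "\<And>m x. nrm m x \<ge> 0"
    using norms unfolding equiv_norm_def by blast+
  have A0: "\<And>m. A m 0 = 0" using bl by (simp add: linear_simps)
  have Adiff: "\<And>m x y. A m (x - y) = A m x - A m y"
    using bl by (simp add: linear_simps)
  have Zeq: "\<And>k. {x. P k x = 0} = Zsp B nrm A k" using P_ker by blast
  have into: "A n v \<in> Zsp B nrm A (n+1)" if v: "v \<in> Zsp B nrm A n" for v
  proof -
    obtain z where z: "z \<in> YB B nrm" "z n = v" "\<forall>m\<le>n. z m = A (m - 1) (z (m - 1))"
      using v unfolding Zsp_def by blast
    define z' where "z' = z(n+1 := A n v)"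
    define c where "c = nrm (n+1) (A n v) - nrm (n+1) (z (n+1))"
    have "(\<lambda>m. nrm m (z m) + c * (if m = n+1 then 1 else 0)) \<in> B"
      using add smul chi z(1) unfolding YB_def by blast
    moreover have "(\<lambda>m. nrm m (z' m)) = (\<lambda>m. nrm m (z m) + c * (if m = n+1 then 1 else 0))"
      by (auto simp: z'_def c_def)
    ultimately have "z' \<in> YB B nrm" unfolding YB_def by simp
    moreover have "\<forall>m\<le>n+1. z' m = A (m - 1) (z' (m - 1))"
    proof (intro allI impI)
      fix m :: int assume m: "m \<le> n+1"
      show "z' m = A (m - 1) (z' (m - 1))"
      proof (cases "m = n+1")
        case True thus ?thesis using z(2) by (simp add: z'_def)
      next
        case False
        hence "m \<le> n" using m by simp
        hence "z m = A (m - 1) (z (m - 1))" using z(3) by blast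
        thus ?thesis using False \<open>m \<le> n\<close> by (simp add: z'_def)
      qed
    qed
    moreover have "z' (n+1) = A n v" by (simp add: z'_def)
    ultimately show ?thesis unfolding Zsp_def by blast
  qed
  have onto: "w \<in> A n ` Zsp B nrm A n" if w: "w \<in> Zsp B nrm A (n+1)" for w
  proof -
    obtain z where z: "z \<in> YB B nrm" "z (n+1) = w" "\<forall>m\<le>n+1. z m = A (m - 1) (z (m - 1))"
      using w unfolding Zsp_def by blast
    have "\<forall>m\<le>n. z m = A (m - 1) (z (m - 1))"
    proof (intro allI impI)
      fix m :: int assume "m \<le> n" hence "m \<le> n+1" by simp
      thus "z m = A (m - 1) (z (m - 1))" using z(3) by blast
    qed
    hence "z n \<in> Zsp B nrm A n" using z(1) unfolding Zsp_def by blast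
    moreover have "w = A n (z n)" proof -
      have "z (n+1) = A (n+1-1) (z (n+1-1))" using z(3) by blast
      thus ?thesis using z(2) by simp
    qed
    ultimately show ?thesis by blast
  qed
  have ker: "v = 0" if v: "v \<in> Zsp B nrm A n" and Av: "A n v = 0" for v
  proof -
    obtain z where z: "z \<in> YB B nrm" "z n = v" "\<forall>m\<le>n. z m = A (m - 1) (z (m - 1))"
      using v unfolding Zsp_def by blast
    define z' where "z' = (\<lambda>m. if m \<le> n then z m else 0)"
    have "\<forall>m. \<bar>nrm m (z' m)\<bar> \<le> \<bar>nrm m (z m)\<bar>"
      using nrmnn nrm0 by (auto simp: z'_def)
    hence z'Y: "z' \<in> YB B nrm" using mono[of "\<lambda>m. nrm m (z m)" "\<lambda>m. nrm m (z' m)"] z(1) unfolding YB_def by simp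
    have 0: "(\<lambda>_::int. 0::'a) \<in> YB B nrm" using zB by (simp add: YB_def nrm0)
    have T: "TB A z' = (\<lambda>_. 0)"
    proof
      fix m
      show "TB A z' m = 0"
      proof (cases "m \<le> n")
        case True
        hence "z m = A (m - 1) (z (m - 1))" using z(3) by blast
        thus ?thesis using True by (simp add: TB_def z'_def)
      next
        case False
        show ?thesis
        proof (cases "m = n+1")
          case True then show ?thesis using z(2) Av by (simp add: TB_def z'_def)
        next
          case False2: False
          with False show ?thesis by (simp add: TB_def z'_def A0)
        qed
      qed
    qed
    have T0: "TB A (\<lambda>_. 0) = (\<lambda>_. 0)" by (simp add: TB_def fun_eq_iff A0)
    have "z' \<in> dom_TB B nrm A" using z'Y T 0 by (simp add: dom_TB_def)
    moreover have "(\<lambda>_. 0) \<in> dom_TB B nrm A" using 0 T0 by (simp add: dom_TB_def)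
    moreover have "inj_on (TB A) (dom_TB B nrm A)" using bij unfolding bij_betw_def by blast
    ultimately have "z' = (\<lambda>_. 0)" using T T0 by (simp add: inj_on_def)
    hence "z' n = 0" by simp
    thus ?thesis using z(2) by (simp add: z'_def)
  qed
  have sub: "x - y \<in> Zsp B nrm A n" if "x \<in> Zsp B nrm A n" "y \<in> Zsp B nrm A n" for x y
  proof -
    have "P n x = 0" "P n y = 0" using that Zeq[of n] by blast+
    hence "P n (x - y) = 0" using P_lin[of n] by (simp add: linear_diff)
    thus ?thesis using Zeq[of n] by blast
  qed
  show "bij_betw (A n) {x. P n x = 0} {x. P (n + 1) x = 0}"
    unfolding Zeq bij_betw_def inj_on_def
  proof (intro conjI ballI impI)
    fix x y assume "x \<in> Zsp B nrm A n" "y \<in> Zsp B nrm A n" "A n x = A n y"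
    hence "A n (x - y) = 0" using Adiff by simp
    thus "x = y" using ker[OF sub[OF \<open>x \<in> _\<close> \<open>y \<in> _\<close>]] by simp
  next
    show "A n ` Zsp B nrm A n = Zsp B nrm A (n + 1)" using into onto by blast
  qed
qed

end
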